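(* Let $(X,d)$ be an infinite metric space. For every snowflaking function $h$ and every $n\in\mathbb N$ there exists $\delta>0$ such that $(X,h\circ d)$ does not admit a $(1+\delta)$-bi-Lipschitz embedding into any normed linear space of dimension $n$.
   Context: Let $\mathbb R_{\geq}=[0,\infty)$. A function $h:\mathbb R_{\geq}\to\mathbb R_{\geq}$ is called a snowflaking function if: (S1) $h(0)=0$; (S2) $h$ is concave; (S3) $h(t)/t\to\infty$ as $t\to0^+$; (S4) $h(t)/t\to 0$ as $t\to\infty$. For such $h$ and a metric $d$ on $X$, $h\circ d$ is again a metric on $X$. A map $f$ between metric spaces is $L$-bi-Lipschitz if $L^{-1}d(x,y)\le d(f(x),f(y))\le L\,d(x,y)$ for all $x,y$. *)

theory Defs
  imports "HOL-Analysis.Analysis"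
begin

definition snowflaking :: "(real \<Rightarrow> real) \<Rightarrow> bool" where
  "snowflaking h \<longleftrightarrow>
     (\<forall>t\<ge>0. h t \<ge> 0) \<and>
     h 0 = 0 \<and>
     concave_on {0..} h \<and>
     filterlim (\<lambda>t. h t / t) at_top (at_right 0) \<and>
     ((\<lambda>t. h t / t) \<longlongrightarrow> 0) at_top"

text \<open>A norm on the real vector space R^n (represented as real ^ 'n).
  Every n-dimensional real normed linear space is isometrically isomorphic
  to (R^n, N) for such a norm N.\<close>
definition is_norm :: "('v::real_vector \<Rightarrow> real) \<Rightarrow> bool" where
  "is_norm N \<longleftrightarrow>
     (\<forall>x. 0 \<le> N x) \<and> (\<forall>x. N x = 0 \<longleftrightarrow> x = 0) \<and>
     (\<forall>c x. N (c *\<^sub>R x) = \<bar>c\<bar> * N x) \<and>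
     (\<forall>x y. N (x + y) \<le> N x + N y)"

definition bi_lipschitz_on ::
  "'a set \<Rightarrow> ('a \<Rightarrow> 'a \<Rightarrow> real) \<Rightarrow> ('b \<Rightarrow> 'b \<Rightarrow> real) \<Rightarrow> real \<Rightarrow> ('a \<Rightarrow> 'b) \<Rightarrow> bool" where
  "bi_lipschitz_on X d e L f \<longleftrightarrow>
     (\<forall>x\<in>X. \<forall>y\<in>X. d x y / L \<le> e (f x) (f y) \<and> e (f x) (f y) \<le> L * d x y)"

end

theory Submission
  imports Defs
begin


lemma is_normD:
  assumes "is_norm N"
  shows "N x \<ge> 0" "N x = 0 \<longleftrightarrow> x = 0" "N (c *\<^sub>R x) = \<bar>c\<bar> * N x" "N (x+y) \<le> N x + N y"
  using assms unfolding is_norm_def by auto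

lemma norm_sym: "is_norm N \<Longrightarrow> N (x - y) = N (y - x)"
  using is_normD(3)[of N "-1" "x - y"] by simp

lemma norm_tri3: "is_norm N \<Longrightarrow> N (x - z) \<le> N (x - y) + N (y - z)"
  using is_normD(4)[of N "x - y" "y - z"] by simp

lemma norm_rev: "is_norm N \<Longrightarrow> \<bar>N x - N y\<bar> \<le> N (x - y)"
  using is_normD(4)[of N "x - y" y] is_normD(4)[of N "y - x" x] norm_sym[of N x y] by auto

lemma norm_convex: "is_norm N \<Longrightarrow> convex_on UNIV N"
proof (rule convex_onI)
  fix t x y assume N: "is_norm N" and t: "(0::real) < t" "t < 1"
  have "N ((1 - t) *\<^sub>R x + t *\<^sub>R y) \<le> N ((1 - t) *\<^sub>R x) + N (t *\<^sub>R y)" using is_normD(4)[OF N] .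
  also have "\<dots> = (1 - t) * N x + t * N y" using is_normD(3)[OF N] t by simp
  finally show "N ((1 - t) *\<^sub>R x + t *\<^sub>R y) \<le> (1 - t) * N x + t * N y" .
qed simp

lemma norm_cont:
  fixes N :: "'v::euclidean_space \<Rightarrow> real"
  shows "is_norm N \<Longrightarrow> continuous_on UNIV N"
  by (rule convex_on_continuous) (auto simp: norm_convex)

lemma norm_lower:
  fixes N :: "'v::euclidean_space \<Rightarrow> real"
  assumes N: "is_norm N"
  shows "\<exists>c>0. \<forall>x. c * norm x \<le> N x"
proof -
  have ne: "sphere (0::'v) 1 \<noteq> {}" by simp
  obtain z where z: "z \<in> sphere 0 1" and zm: "\<forall>y\<in>sphere 0 1. N z \<le> N y"
    using continuous_attains_inf[OF compact_sphere ne continuous_on_subset[OF norm_cont[OF N]]] by blast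
  have "z \<noteq> 0" using z by auto
  hence pos: "N z > 0" using is_normD(1,2)[OF N, of z] by auto
  have "N z * norm x \<le> N x" for x
  proof (cases "x = 0")
    case True thus ?thesis using is_normD(1)[OF N] by simp
  next
    case False
    have "(1/norm x) *\<^sub>R x \<in> sphere 0 1" using False by simp
    hence "N z \<le> N ((1/norm x) *\<^sub>R x)" using zm by blast
    also have "\<dots> = N x / norm x" using is_normD(3)[OF N] by simp
    finally show ?thesis using False by (simp add: field_simps)
  qed
  thus ?thesis using pos by blast
qed

definition NB :: "('v \<Rightarrow> real) \<Rightarrow> 'v::real_vector \<Rightarrow> real \<Rightarrow> 'v set" where
  "NB N c r = {x. N (x - c) < r}"

lemma NB_open:
  fixes N :: "'v::euclidean_space \<Rightarrow> real"
  assumes N: "is_norm N" shows "open (NB N c r)"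
proof -
  have "continuous_on UNIV (\<lambda>x. N (x - c))"
    by (rule continuous_on_compose2[OF norm_cont[OF N]]) (auto intro!: continuous_intros)
  thus ?thesis unfolding NB_def by (intro open_Collect_less) auto
qed

lemma NB_bounded:
  fixes N :: "'v::euclidean_space \<Rightarrow> real"
  assumes N: "is_norm N" shows "bounded (NB N c r)"
proof -
  obtain k where k: "k > 0" "\<forall>x. k * norm x \<le> N x" using norm_lower[OF N] by blast
  have "NB N c r \<subseteq> cball c (r / k)"
  proof
    fix x assume "x \<in> NB N c r"
    hence "k * norm (x - c) < r" using k(2)[rule_format, of "x - c"] unfolding NB_def by simp
    thus "x \<in> cball c (r / k)" using k(1) by (simp add: dist_norm norm_minus_commute field_simps)
  qed
  thus ?thesis using bounded_cball bounded_subset by blast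
qed

lemma NB_affine:
  fixes N :: "'v::euclidean_space \<Rightarrow> real"
  assumes N: "is_norm N" and r: "r > 0"
  shows "NB N c r = (\<lambda>x. r *\<^sub>R x + c) ` NB N 0 1"
proof
  show "NB N c r \<subseteq> (\<lambda>x. r *\<^sub>R x + c) ` NB N 0 1"
  proof
    fix x assume x: "x \<in> NB N c r"
    have "N ((1/r) *\<^sub>R (x - c)) = N (x - c) / r" using is_normD(3)[OF N] r by simp
    hence "(1/r) *\<^sub>R (x - c) \<in> NB N 0 1" using x r unfolding NB_def by simp
    moreover have "x = r *\<^sub>R ((1/r) *\<^sub>R (x - c)) + c" using r by simp
    ultimately show "x \<in> (\<lambda>x. r *\<^sub>R x + c) ` NB N 0 1" by blast
  qed
next
  show "(\<lambda>x. r *\<^sub>R x + c) ` NB N 0 1 \<subseteq> NB N c r"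
    using is_normD(3)[OF N] r by (auto simp: NB_def)
qed

lemma NB_lmeasurable:
  fixes N :: "'v::euclidean_space \<Rightarrow> real"
  assumes N: "is_norm N" shows "NB N c r \<in> lmeasurable"
  by (rule lmeasurable_open[OF NB_bounded[OF N] NB_open[OF N]])

lemma NB_measure:
  fixes N :: "'v::euclidean_space \<Rightarrow> real"
  assumes N: "is_norm N" and r: "r > 0"
  shows "measure lebesgue (NB N c r) = r ^ DIM('v) * measure lebesgue (NB N 0 1)"
  using NB_affine[OF N r, of c] measure_lebesgue_affine[of r c "NB N 0 1"] r by simp

lemma NB_measure_pos:
  fixes N :: "'v::euclidean_space \<Rightarrow> real"
  assumes N: "is_norm N"
  shows "measure lebesgue (NB N 0 1) > 0"
proof -
  have "0 \<in> NB N 0 1" using is_normD(2)[OF N, of 0] unfolding NB_def by simp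
  then obtain e where e: "e > 0" "ball 0 e \<subseteq> NB N 0 1" using NB_open[OF N] open_contains_ball by blast
  have "0 < measure lborel (ball (0::'v) e)" using content_ball_pos[OF e(1)] by simp
  also have "measure lborel (ball (0::'v) e) = measure lebesgue (ball (0::'v) e)" by simp
  also have "\<dots> \<le> measure lebesgue (NB N 0 1)"
    by (rule measure_mono_fmeasurable[OF e(2)]) (auto intro: NB_lmeasurable[OF N])
  finally show ?thesis .
qed

lemma packing:
  fixes N :: "'v::euclidean_space \<Rightarrow> real"
  assumes N: "is_norm N" and R0: "R \<ge> 0" and P: "finite P" "\<forall>p\<in>P. N (p - c) \<le> R"
    and sep: "\<forall>p\<in>P. \<forall>q\<in>P. p \<noteq> q \<longrightarrow> 1 \<le> N (p - q)"
  shows "real (card P) \<le> (2 * R + 1) ^ DIM('v)"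
proof (cases "P = {}")
  case True thus ?thesis using R0 by simp
next
  case False
  have R: "R \<ge> 0" by (rule R0)
  define \<mu> where "\<mu> = measure lebesgue (NB N (0::'v) 1)"
  have mu: "\<mu> > 0" using NB_measure_pos[OF N] unfolding \<mu>_def .
  have disj: "pairwise (\<lambda>p q. disjnt (NB N p (1/2)) (NB N q (1/2))) P"
  proof (clarsimp simp: pairwise_def disjnt_def)
    fix p q assume pq: "p \<in> P" "q \<in> P" "p \<noteq> q"
    show "NB N p (1/2) \<inter> NB N q (1/2) = {}"
    proof (rule ccontr)
      assume "NB N p (1/2) \<inter> NB N q (1/2) \<noteq> {}"
      then obtain x where "N (x - p) < 1/2" "N (x - q) < 1/2" unfolding NB_def by blast
      moreover have "N (p - q) \<le> N (p - x) + N (x - q)" by (rule norm_tri3[OF N])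
      moreover have "N (p - x) = N (x - p)" by (rule norm_sym[OF N])
      ultimately show False using sep pq by force
    qed
  qed
  have sub: "(\<Union>p\<in>P. NB N p (1/2)) \<subseteq> NB N c (R + 1/2)"
  proof clarify
    fix p x assume "p \<in> P" "x \<in> NB N p (1/2)"
    moreover have "N (x - c) \<le> N (x - p) + N (p - c)" by (rule norm_tri3[OF N])
    ultimately show "x \<in> NB N c (R + 1/2)" using P(2) unfolding NB_def by force
  qed
  have "measure lebesgue (\<Union>p\<in>P. NB N p (1/2)) = (\<Sum>p\<in>P. measure lebesgue (NB N p (1/2)))"
    by (rule measure_UNION'[OF P(1)]) (auto simp: NB_lmeasurable[OF N] disj)
  also have "\<dots> = real (card P) * ((1/2) ^ DIM('v) * \<mu>)"
    using NB_measure[OF N, of "1/2"] unfolding \<mu>_def by simp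
  finally have eq: "measure lebesgue (\<Union>p\<in>P. NB N p (1/2)) = real (card P) * ((1/2) ^ DIM('v) * \<mu>)" .
  have "measure lebesgue (\<Union>p\<in>P. NB N p (1/2)) \<le> measure lebesgue (NB N c (R + 1/2))"
    by (rule measure_mono_fmeasurable[OF sub]) (auto intro!: sets.finite_UN fmeasurableD NB_lmeasurable[OF N] P(1))
  also have "\<dots> = (R + 1/2) ^ DIM('v) * \<mu>" using NB_measure[OF N, of "R + 1/2"] R unfolding \<mu>_def by simp
  finally have "real (card P) * (1/2) ^ DIM('v) * \<mu> \<le> (R + 1/2) ^ DIM('v) * \<mu>" using eq by simp
  hence "real (card P) * (1/2) ^ DIM('v) \<le> (R + 1/2) ^ DIM('v)" using mu by simp
  hence "real (card P) * (1/2) ^ DIM('v) * 2 ^ DIM('v) \<le> (R + 1/2) ^ DIM('v) * 2 ^ DIM('v)"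
    by (simp add: mult_right_mono)
  thus ?thesis by (simp add: power_mult_distrib[symmetric] algebra_simps)
qed



lemma arith_key:
  fixes \<delta> L hS hB e a c w :: real
  assumes "0 < \<delta>" "\<delta> \<le> 1/10" "L = 1 + \<delta>" "hS > 0" "hS \<le> hB" "e \<ge> hB - hS/4"
    "hB/L \<le> a" "a \<le> L*hB" "hS/L \<le> c" "c \<le> L*hS" "e/L \<le> w" "w \<le> \<bar>a - c\<bar> + c/4"
  shows "hS \<le> 5*\<delta>*hB"
proof -
  have L: "L > 0" "L \<le> 11/10" using assms by auto
  have a1: "hB \<le> L*a" "hS \<le> L*c" "e \<le> L*w" using assms(7,9,11) L by (auto simp: field_simps)
  have La: "L*a \<le> L*(L*hB)" using assms(8) L by (intro mult_left_mono) auto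
  have Lc: "L*c \<le> L*(L*hS)" using assms(10) L by (intro mult_left_mono) auto
  have LL: "L*L \<le> 121/100" using L mult_mono[of L "11/10" L "11/10"] by auto
  show ?thesis
  proof (cases "a \<ge> c")
    case True
    hence "w \<le> a - 3*c/4" using assms(12) by auto
    hence "L*w \<le> L*(a - 3*c/4)" using L by (intro mult_left_mono) auto
    hence "hB - hS/4 \<le> L*(L*hB) - 3*hS/4" using a1 assms(6) La by (simp add: algebra_simps)
    hence "hS/2 \<le> (L*L - 1)*hB" by (simp add: algebra_simps)
    also have "(L*L - 1) = \<delta>*(2+\<delta>)" using assms(3) by (simp add: algebra_simps)
    finally have "hS/2 \<le> \<delta>*(2+\<delta>)*hB" .
    moreover have "\<delta>*(2+\<delta>)*hB \<le> \<delta>*(5/2)*hB" using assms by (intro mult_right_mono mult_left_mono) auto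
    ultimately show ?thesis by simp
  next
    case False
    hence "w \<le> 5*c/4 - a" using assms(12) by auto
    hence "L*w \<le> L*(5*c/4 - a)" using L by (intro mult_left_mono) auto
    hence "hB - hS/4 \<le> 5/4*(L*(L*hS)) - hB" using a1 assms(6) Lc by (simp add: algebra_simps)
    moreover have "(L*L)*hS \<le> 121/100*hS" using LL assms(4) by (intro mult_right_mono) auto
    ultimately have "2*hB \<le> hS/4 + 5/4*(121/100)*hS" by (simp add: algebra_simps)
    thus ?thesis using assms by linarith
  qed
qed
context
  fixes h :: "real \<Rightarrow> real"
  assumes sf: "snowflaking h"
begin

lemma h_nonneg: "t \<ge> 0 \<Longrightarrow> h t \<ge> 0" using sf unfolding snowflaking_def by auto
lemma h_0: "h 0 = 0" using sf unfolding snowflaking_def by auto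
lemma h_conc: "concave_on {0..} h" using sf unfolding snowflaking_def by auto

lemma h_ratio: assumes "0 < s" "s \<le> t" shows "(s/t) * h t \<le> h s"
proof -
  have "(1 - s/t) * h 0 + (s/t) * h t \<le> h ((1 - s/t) *\<^sub>R 0 + (s/t) *\<^sub>R t)"
    by (rule concave_onD[OF h_conc]) (use assms in auto)
  thus ?thesis using assms h_0 by simp
qed

lemma g_anti: assumes "0 < s" "s \<le> t" shows "h t / t \<le> h s / s"
  using h_ratio[OF assms] assms by (simp add: field_simps)

lemma h_mono: assumes "0 \<le> s" "s \<le> t" shows "h s \<le> h t"
proof (rule ccontr)
  assume "\<not> ?thesis"
  hence lt: "h t < h s" by simp
  have st: "s < t" using lt assms by (cases "s = t") auto
  have ht: "h t \<ge> 0" using h_nonneg assms by auto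
  hence hs: "h s > 0" using lt by linarith
  define T where "T = s + 2*(t-s)*h s/(h s - h t)"
  have q: "h s/(h s - h t) \<ge> 1" using hs ht lt by (simp add: field_simps)
  have "2*(t-s)*h s/(h s - h t) = 2*(t-s)*(h s/(h s - h t))" by simp
  also have "\<dots> \<ge> 2*(t-s)*1" by (rule mult_left_mono[OF q]) (use st in simp)
  finally have Tt: "T > t" unfolding T_def using st by simp
  define lam where "lam = (T - t)/(T - s)"
  have lam: "0 \<le> lam" "lam \<le> 1" using Tt st unfolding lam_def by (auto simp: field_simps)
  have ne: "T - s \<noteq> 0" using Tt st by simp
  have "(1 - lam) *\<^sub>R T + lam *\<^sub>R s = ((t - s) * T + (T - t) * s) / (T - s)"
  proof -
    have "1 - lam = (t - s) / (T - s)" unfolding lam_def using ne by (simp add: field_simps)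
    hence "(1 - lam) *\<^sub>R T + lam *\<^sub>R s = (t - s) / (T - s) * T + (T - t) / (T - s) * s"
      unfolding lam_def by simp
    also have "\<dots> = ((t - s) * T + (T - t) * s) / (T - s)" by (simp add: add_divide_distrib)
    finally show ?thesis .
  qed
  also have "\<dots> = t * (T - s) / (T - s)" by (simp add: algebra_simps)
  also have "\<dots> = t" using ne by simp
  finally have tt: "(1 - lam) *\<^sub>R T + lam *\<^sub>R s = t" .
  have "(1 - lam) * h T + lam * h s \<le> h ((1 - lam) *\<^sub>R T + lam *\<^sub>R s)"
    by (rule concave_onD[OF h_conc]) (use lam assms Tt in auto)
  hence "(1 - lam) * h T + lam * h s \<le> h t" using tt by simp
  moreover have "h T \<ge> 0" using h_nonneg Tt assms by auto
  ultimately have "lam * h s \<le> h t" using lam by (smt (verit) mult_nonneg_nonneg)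
  moreover have "lam = 1 - (h s - h t)/(2 * h s)"
  proof -
    have W: "T - s = 2*(t-s)*h s/(h s - h t)" by (simp add: T_def)
    have "lam = ((T - s) - (t - s))/(T - s)" unfolding lam_def by simp
    also have "\<dots> = 1 - (t - s)/(T - s)" by (metis diff_divide_distrib divide_self ne)
    also have "(t - s)/(T - s) = (h s - h t)/(2 * h s)" unfolding W using st hs lt by (simp add: field_simps)
    finally show ?thesis .
  qed
  ultimately have "h s - (h s - h t)/2 \<le> h t" using hs by (simp add: field_simps)
  thus False using lt by (simp add: field_simps)
qed

lemma g_small: "\<exists>\<tau>>0. \<forall>t. 0 < t \<and> t \<le> \<tau> \<longrightarrow> K \<le> h t / t"
proof -
  have "filterlim (\<lambda>t. h t / t) at_top (at_right 0)" using sf unfolding snowflaking_def by auto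
  hence "eventually (\<lambda>t. h t / t \<ge> K) (at_right 0)" by (simp add: filterlim_at_top)
  then obtain b where b: "b > 0" "\<forall>y>0. y < b \<longrightarrow> h y / y \<ge> K"
    unfolding eventually_at_right_field by auto
  thus ?thesis by (intro exI[of _ "b/2"]) auto
qed

lemma h_pos: assumes "t > 0" shows "h t > 0"
proof -
  obtain \<tau> where \<tau>: "\<tau> > 0" "\<forall>y. 0 < y \<and> y \<le> \<tau> \<longrightarrow> 1 \<le> h y / y" using g_small by blast
  define y where "y = min t \<tau>"
  have y: "0 < y" "y \<le> \<tau>" "y \<le> t" using assms \<tau> unfolding y_def by auto
  hence "h y \<ge> y" using \<tau>(2) by (simp add: field_simps)
  moreover have "h y \<le> h t" using h_mono y by auto
  ultimately show ?thesis using y by linarith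
qed

lemma g_big: assumes "\<epsilon> > 0" shows "\<exists>T>0. \<forall>t\<ge>T. h t / t \<le> \<epsilon>"
proof -
  have "((\<lambda>t. h t / t) \<longlongrightarrow> 0) at_top" using sf unfolding snowflaking_def by auto
  hence "eventually (\<lambda>t. dist (h t / t) 0 < \<epsilon>) at_top" using assms tendstoD by blast
  then obtain T where "\<forall>t\<ge>T. dist (h t / t) 0 < \<epsilon>" unfolding eventually_at_top_linorder by auto
  hence T: "\<forall>t\<ge>max T 1. h t / t \<le> \<epsilon>"
    using h_nonneg by (auto simp: dist_real_def abs_of_nonneg)
  show ?thesis by (rule exI[of _ "max T 1"]) (use T in auto)
qed

end


definition cfgII :: "'a set \<Rightarrow> ('a \<Rightarrow> 'a \<Rightarrow> real) \<Rightarrow> (real \<Rightarrow> real) \<Rightarrow> nat \<Rightarrow> bool" where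
  "cfgII X d h K \<longleftrightarrow> (\<exists>b\<in>X. \<exists>x::nat\<Rightarrow>'a. (\<forall>i<K. x i \<in> X \<and> d (x i) b > 0) \<and>
     (\<forall>i<K. \<forall>j<K. i \<noteq> j \<longrightarrow> d (x i) b \<noteq> d (x j) b) \<and>
     (\<forall>i<K. \<forall>j<K. d (x j) b < d (x i) b \<longrightarrow> 2 * d (x j) b \<le> d (x i) b \<and>
         h (d (x i) b / 2) / (d (x i) b / 2) \<le> h (d (x j) b) / d (x j) b / 4))"

definition cfgI :: "'a set \<Rightarrow> ('a \<Rightarrow> 'a \<Rightarrow> real) \<Rightarrow> nat \<Rightarrow> real \<Rightarrow> real \<Rightarrow> bool" where
  "cfgI X d K \<epsilon> R \<longleftrightarrow> (\<exists>S\<subseteq>X. finite S \<and> card S = K \<and> (\<forall>x\<in>S. \<forall>y\<in>S. x \<noteq> y \<longrightarrow> \<epsilon> \<le> d x y \<and> d x y \<le> R))"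

context Metric_space
begin

lemma cfg_unbounded:
  assumes sf: "snowflaking h" and b: "b \<in> M" and unb: "\<forall>r. \<exists>x\<in>M. d x b > r"
  shows "cfgII M d h K"
proof -
  define g where "g t = h t / t" for t
  have nxt: "\<forall>\<rho>. \<exists>x. \<rho> > 0 \<longrightarrow> x \<in> M \<and> d x b \<ge> 2*\<rho> \<and> g (d x b / 2) \<le> g \<rho> / 4"
  proof (intro allI)
    fix \<rho>::real
    show "\<exists>x. \<rho> > 0 \<longrightarrow> x \<in> M \<and> d x b \<ge> 2*\<rho> \<and> g (d x b / 2) \<le> g \<rho> / 4"
    proof (cases "\<rho> > 0")
      case True
      have "g \<rho> > 0" using h_pos[OF sf True] True unfolding g_def by simp
      then obtain T where T: "T>0" "\<forall>t\<ge>T. h t / t \<le> g \<rho>/4" using g_big[OF sf, of "g \<rho>/4"] by auto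
      obtain x where x: "x \<in> M" "d x b > max (2*\<rho>) (2*T)" using unb by blast
      hence "T \<le> d x b / 2" by simp
      hence "g (d x b / 2) \<le> g \<rho> / 4" using T(2) unfolding g_def by blast
      thus ?thesis using x by auto
    qed auto
  qed
  then obtain F where F: "\<And>\<rho>. \<rho> > 0 \<Longrightarrow> F \<rho> \<in> M \<and> d (F \<rho>) b \<ge> 2*\<rho> \<and> g (d (F \<rho>) b / 2) \<le> g \<rho> / 4"
    by metis
  obtain x0 where x0: "x0 \<in> M" "d x0 b > 0" using unb by blast
  define xs where "xs = rec_nat x0 (\<lambda>_ y. F (d y b))"
  have xsS: "xs (Suc n) = F (d (xs n) b)" for n unfolding xs_def by simp
  define D where "D n = d (xs n) b" for n
  have P: "xs n \<in> M \<and> D n > 0" for n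
  proof (induction n)
    case 0 thus ?case using x0 unfolding xs_def D_def by simp
  next
    case (Suc n)
    hence "F (D n) \<in> M \<and> d (F (D n)) b \<ge> 2 * D n" using F by blast
    thus ?case using Suc xsS unfolding D_def by auto
  qed
  have step: "D (Suc n) \<ge> 2 * D n \<and> g (D (Suc n)/2) \<le> g (D n)/4" for n
    using F[of "D n"] P[of n] xsS[of n] unfolding D_def by auto
  have gen: "i < j \<Longrightarrow> D j \<ge> 2 * D i \<and> g (D j/2) \<le> g (D i)/4" for i j
  proof (induction j)
    case 0 thus ?case by simp
  next
    case (Suc j)
    show ?case
    proof (cases "i = j")
      case True thus ?thesis using step by simp
    next
      case False
      hence ij: "i < j" using Suc by simp
      hence IH: "D j \<ge> 2 * D i" "g (D j/2) \<le> g (D i)/4" using Suc by auto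
      have "g (D j) \<le> g (D i)" unfolding g_def using g_anti[OF sf] P[of i] IH(1) by auto
      thus ?thesis using step[of j] IH P[of i] by auto
    qed
  qed
  have lt: "i < j \<Longrightarrow> D i < D j" for i j using gen[of i j] P[of i] by auto
  show ?thesis unfolding cfgII_def
  proof (intro bexI[OF _ b] exI[of _ xs] conjI allI impI)
    fix i j assume "i < K" "j < K" "i \<noteq> j"
    thus "d (xs i) b \<noteq> d (xs j) b" using lt[of i j] lt[of j i] unfolding D_def by (cases "i < j") auto
  next
    fix i j assume "i < K" "j < K" and ji: "d (xs j) b < d (xs i) b"
    hence "j < i" using lt[of i j] unfolding D_def by (cases "j < i"; cases "i = j") auto
    thus "2 * d (xs j) b \<le> d (xs i) b" "h (d (xs i) b / 2) / (d (xs i) b / 2) \<le> h (d (xs j) b) / d (xs j) b / 4"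
      using gen[of j i] unfolding D_def g_def by auto
  qed (use P D_def in auto)
qed

lemma cfg_sep:
  assumes e: "\<epsilon> > 0" and nc: "\<forall>F. finite F \<and> F \<subseteq> M \<longrightarrow> \<not> (M \<subseteq> (\<Union>x\<in>F. mball x \<epsilon>))"
    and b: "b \<in> M" and R: "\<forall>x\<in>M. d x b \<le> R"
  shows "cfgI M d K \<epsilon> (2*R)"
proof -
  have "\<exists>S\<subseteq>M. finite S \<and> card S = K \<and> (\<forall>x\<in>S. \<forall>y\<in>S. x \<noteq> y \<longrightarrow> \<epsilon> \<le> d x y)"
  proof (induction K)
    case 0 show ?case by (intro exI[of _ "{}"]) auto
  next
    case (Suc K)
    then obtain S where S: "S \<subseteq> M" "finite S" "card S = K" "\<forall>x\<in>S. \<forall>y\<in>S. x \<noteq> y \<longrightarrow> \<epsilon> \<le> d x y"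
      by blast
    have "\<not> M \<subseteq> (\<Union>x\<in>S. mball x \<epsilon>)" using nc[rule_format, of S] S(1,2) by simp
    then obtain z where z: "z \<in> M" "z \<notin> (\<Union>x\<in>S. mball x \<epsilon>)" by (meson subsetI)
    have zS: "\<forall>x\<in>S. \<epsilon> \<le> d x z"
    proof
      fix x assume xS: "x \<in> S"
      hence xM: "x \<in> M" using S(1) by blast
      have "z \<notin> mball x \<epsilon>" using z(2) xS by blast
      thus "\<epsilon> \<le> d x z" using xM z(1) by (simp add: not_less)
    qed
    have "z \<notin> S"
    proof
      assume "z \<in> S"
      hence "\<epsilon> \<le> d z z" using zS by blast
      thus False using z(1) e by simp
    qed
    moreover have "\<forall>x\<in>insert z S. \<forall>y\<in>insert z S. x \<noteq> y \<longrightarrow> \<epsilon> \<le> d x y"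
    proof (intro ballI impI)
      fix x y assume "x \<in> insert z S" "y \<in> insert z S" "x \<noteq> y"
      then consider "x = z" "y \<in> S" | "y = z" "x \<in> S" | "x \<in> S" "y \<in> S" by blast
      thus "\<epsilon> \<le> d x y"
      proof cases
        case 1 thus ?thesis using zS commute[of z y] by simp
      next
        case 2 thus ?thesis using zS by simp
      next
        case 3 thus ?thesis using S(4) \<open>x \<noteq> y\<close> by blast
      qed
    qed
    ultimately show ?case using S z by (intro exI[of _ "insert z S"]) auto
  qed
  then obtain S where S: "S \<subseteq> M" "finite S" "card S = K" "\<forall>x\<in>S. \<forall>y\<in>S. x \<noteq> y \<longrightarrow> \<epsilon> \<le> d x y"
    by blast
  have "\<forall>x\<in>S. \<forall>y\<in>S. d x y \<le> 2*R"
  proof (intro ballI)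
    fix x y assume "x \<in> S" "y \<in> S"
    hence xy: "x \<in> M" "y \<in> M" using S(1) by auto
    hence "d x y \<le> d x b + d b y" using triangle b by blast
    moreover have "d x b \<le> R" "d y b \<le> R" using R xy by auto
    ultimately show "d x y \<le> 2*R" using commute[of b y] by linarith
  qed
  thus ?thesis unfolding cfgI_def using S by blast
qed

end


context Metric_space
begin

lemma cfg_cauchy:
  assumes sf: "snowflaking h" and inj: "inj y" and C: "MCauchy y"
  shows "cfgII M d h K"
proof -
  define g where "g t = h t / t" for t
  have yM: "y n \<in> M" for n using C unfolding MCauchy_def by auto
  have Cy: "\<forall>\<epsilon>>0. \<exists>N. \<forall>n n'. N \<le> n \<longrightarrow> N \<le> n' \<longrightarrow> d (y n) (y n') < \<epsilon>" using C unfolding MCauchy_def by auto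
  have tri: "d a c \<le> d a b + d b c" if "a \<in> M" "b \<in> M" "c \<in> M" for a b c using triangle that by blast
  have conv: "convergent (\<lambda>k. d (y p) (y k))" for p
  proof -
    have "Cauchy (\<lambda>k. d (y p) (y k))"
    proof (rule metric_CauchyI)
      fix e :: real assume "0 < e"
      then obtain N where N: "\<forall>n n'. N \<le> n \<longrightarrow> N \<le> n' \<longrightarrow> d (y n) (y n') < e" using Cy by blast
      have "dist (d (y p) (y k)) (d (y p) (y l)) < e" if "k \<ge> N" "l \<ge> N" for k l
      proof -
        have "d (y p) (y k) \<le> d (y p) (y l) + d (y l) (y k)" by (rule tri) (auto simp: yM)
        moreover have "d (y p) (y l) \<le> d (y p) (y k) + d (y k) (y l)" by (rule tri) (auto simp: yM)
        moreover have "d (y l) (y k) < e" "d (y k) (y l) < e" using N that by auto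
        ultimately show ?thesis unfolding dist_real_def by linarith
      qed
      thus "\<exists>N. \<forall>k\<ge>N. \<forall>l\<ge>N. dist (d (y p) (y k)) (d (y p) (y l)) < e" by blast
    qed
    thus ?thesis using Cauchy_convergent_iff by blast
  qed
  define rv where "rv p = lim (\<lambda>k. d (y p) (y k))" for p
  have lim: "(\<lambda>k. d (y p) (y k)) \<longlonglongrightarrow> rv p" for p using conv convergent_LIMSEQ_iff unfolding rv_def by blast
  have rv_nn: "rv p \<ge> 0" for p by (rule LIMSEQ_le_const[OF lim]) auto
  have rv_small: "\<exists>N. \<forall>p\<ge>N. rv p \<le> e" if e: "e > 0" for e
  proof -
    obtain N where N: "\<forall>n n'. N \<le> n \<longrightarrow> N \<le> n' \<longrightarrow> d (y n) (y n') < e" using Cy e by blast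
    have "rv p \<le> e" if "p \<ge> N" for p
      by (rule LIMSEQ_le_const2[OF lim]) (use N that in \<open>auto intro!: exI[of _ N] less_imp_le\<close>)
    thus ?thesis by blast
  qed
  have uniq: "p = q" if "rv p = 0" "rv q = 0" for p q
  proof -
    have l2: "(\<lambda>k. d (y p) (y k) + d (y q) (y k)) \<longlonglongrightarrow> rv p + rv q" by (intro tendsto_add lim)
    have "\<forall>k. d (y p) (y q) \<le> d (y p) (y k) + d (y q) (y k)"
      using tri[OF yM yM yM] commute by metis
    hence "d (y p) (y q) \<le> rv p + rv q" by (intro LIMSEQ_le_const[OF l2]) auto
    hence "d (y p) (y q) = 0" using that nonneg[of "y p" "y q"] by linarith
    hence "y p = y q" using yM by simp
    thus ?thesis using inj by (simp add: inj_eq)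
  qed
  have exsmall: "\<exists>p. 0 < rv p \<and> rv p \<le> e" if e: "e > 0" for e
  proof -
    obtain N where N: "\<forall>p\<ge>N. rv p \<le> e" using rv_small[OF e] by blast
    show ?thesis
    proof (cases "rv N = 0")
      case True
      hence "rv (Suc N) \<noteq> 0" using uniq[of N "Suc N"] by auto
      hence "rv (Suc N) > 0" using rv_nn[of "Suc N"] by linarith
      thus ?thesis using N by (intro exI[of _ "Suc N"]) auto
    next
      case False
      hence "rv N > 0" using rv_nn[of N] by linarith
      thus ?thesis using N by (intro exI[of _ N]) auto
    qed
  qed
  have nxt: "\<forall>\<rho>. \<exists>p. \<rho> > 0 \<longrightarrow> 0 < rv p \<and> rv p \<le> \<rho>/8 \<and> 4 * g (\<rho>/4) \<le> g (2 * rv p)"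
  proof
    fix \<rho> :: real
    show "\<exists>p. \<rho> > 0 \<longrightarrow> 0 < rv p \<and> rv p \<le> \<rho>/8 \<and> 4 * g (\<rho>/4) \<le> g (2 * rv p)"
    proof (cases "\<rho> > 0")
      case True
      obtain \<tau> where \<tau>: "\<tau> > 0" "\<forall>t. 0 < t \<and> t \<le> \<tau> \<longrightarrow> 4 * g (\<rho>/4) \<le> h t / t"
        using g_small[OF sf, of "4 * g (\<rho>/4)"] by blast
      obtain p where p: "0 < rv p" "rv p \<le> min (\<rho>/8) (\<tau>/2)" using exsmall[of "min (\<rho>/8) (\<tau>/2)"] True \<tau>(1) by auto
      have "4 * g (\<rho>/4) \<le> g (2 * rv p)" using \<tau>(2)[rule_format, of "2 * rv p"] p unfolding g_def by auto
      thus ?thesis using p by auto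
    qed auto
  qed
  then obtain F where F: "\<And>\<rho>. \<rho> > 0 \<Longrightarrow> 0 < rv (F \<rho>) \<and> rv (F \<rho>) \<le> \<rho>/8 \<and> 4 * g (\<rho>/4) \<le> g (2 * rv (F \<rho>))"
    by metis
  obtain m0 where m0: "0 < rv m0" using exsmall[of 1] by auto
  define ms where "ms = rec_nat m0 (\<lambda>_ m. F (rv m))"
  have msS: "ms (Suc n) = F (rv (ms n))" for n unfolding ms_def by simp
  define \<rho> where "\<rho> n = rv (ms n)" for n
  have pos: "\<rho> n > 0" for n
  proof (induction n)
    case 0 thus ?case using m0 unfolding \<rho>_def ms_def by simp
  next
    case (Suc n) thus ?case using F[of "\<rho> n"] msS[of n] unfolding \<rho>_def by simp
  qed
  have step: "\<rho> (Suc n) \<le> \<rho> n/8 \<and> 4 * g (\<rho> n/4) \<le> g (2 * \<rho> (Suc n))" for n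
    using F[of "\<rho> n"] pos[of n] msS[of n] unfolding \<rho>_def by simp
  have gen: "i < j \<Longrightarrow> \<rho> j \<le> \<rho> i/8 \<and> 4 * g (\<rho> i/4) \<le> g (2 * \<rho> j)" for i j
  proof (induction j)
    case 0 thus ?case by simp
  next
    case (Suc j)
    show ?case
    proof (cases "i = j")
      case True thus ?thesis using step by simp
    next
      case False
      hence "i < j" using Suc by simp
      hence IH: "\<rho> j \<le> \<rho> i/8" "4 * g (\<rho> i/4) \<le> g (2 * \<rho> j)" using Suc by auto
      have "\<rho> (Suc j) \<le> \<rho> j/8" using step by blast
      hence a: "\<rho> (Suc j) \<le> \<rho> i/8" using IH pos[of i] pos[of j] by linarith
      have "g (2 * \<rho> j) \<le> g (2 * \<rho> (Suc j))"
        unfolding g_def using g_anti[OF sf, of "2 * \<rho> (Suc j)" "2 * \<rho> j"] pos[of "Suc j"] pos[of j] \<open>\<rho> (Suc j) \<le> \<rho> j/8\<close>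
        by auto
      thus ?thesis using a IH by linarith
    qed
  qed
  have "eventually (\<lambda>k. \<forall>i\<in>{..<K}. dist (d (y (ms i)) (y k)) (\<rho> i) < \<rho> i/2) sequentially"
  proof (rule eventually_ball_finite)
    show "\<forall>i\<in>{..<K}. eventually (\<lambda>k. dist (d (y (ms i)) (y k)) (\<rho> i) < \<rho> i/2) sequentially"
    proof
      fix i
      show "eventually (\<lambda>k. dist (d (y (ms i)) (y k)) (\<rho> i) < \<rho> i/2) sequentially"
        using tendstoD[OF lim[of "ms i"], of "\<rho> i/2"] pos[of i] unfolding \<rho>_def by simp
    qed
  qed simp
  then obtain Nb where Nb: "\<forall>i<K. dist (d (y (ms i)) (y Nb)) (\<rho> i) < \<rho> i/2"
    unfolding eventually_sequentially by blast
  define D where "D i = d (y (ms i)) (y Nb)" for i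
  have Db: "\<rho> i/2 < D i \<and> D i < 3*\<rho> i/2" if "i < K" for i
  proof -
    have "\<bar>D i - \<rho> i\<bar> < \<rho> i/2" using Nb that unfolding D_def dist_real_def by blast
    thus ?thesis by linarith
  qed
  have sep: "2 * D j < D i" if "i < K" "j < K" "i < j" for i j
    using Db[OF that(1)] Db[OF that(2)] gen[OF that(3)] pos[of i] by linarith
  have ord: "i < j" if "i < K" "j < K" "D j < D i" for i j
  proof (rule ccontr)
    assume "\<not> i < j"
    hence "j < i \<or> i = j" by auto
    thus False using sep[of j i] that Db[of i] pos[of i] by auto
  qed
  show ?thesis unfolding cfgII_def
  proof (intro bexI[OF _ yM] exI[of _ "\<lambda>i. y (ms i)"] conjI allI impI)
    fix i assume "i < K"
    thus "y (ms i) \<in> M" "0 < d (y (ms i)) (y Nb)" using yM Db[of i] pos[of i] unfolding D_def by auto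
  next
    fix i j assume ij: "i < K" "j < K" "i \<noteq> j"
    thus "d (y (ms i)) (y Nb) \<noteq> d (y (ms j)) (y Nb)"
      using sep[of i j] sep[of j i] Db[of i] Db[of j] pos[of i] pos[of j] unfolding D_def
      by (cases "i < j") auto
  next
    fix i j assume ij: "i < K" "j < K" and lt: "d (y (ms j)) (y Nb) < d (y (ms i)) (y Nb)"
    hence ij2: "i < j" using ord unfolding D_def by blast
    show "2 * d (y (ms j)) (y Nb) \<le> d (y (ms i)) (y Nb)" using sep[OF ij ij2] unfolding D_def by simp
    have Di: "\<rho> i/2 < D i" "D j < 3*\<rho> j/2" using Db ij by auto
    have "g (D i/2) \<le> g (\<rho> i/4)" unfolding g_def using g_anti[OF sf, of "\<rho> i/4" "D i/2"] pos[of i] Di by auto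
    also have "\<dots> \<le> g (2 * \<rho> j)/4" using gen[OF ij2] by simp
    also have "g (2 * \<rho> j) \<le> g (D j)" unfolding g_def using g_anti[OF sf, of "D j" "2 * \<rho> j"] Db[OF ij(2)] pos[of j] by auto
    finally show "h (d (y (ms i)) (y Nb) / 2) / (d (y (ms i)) (y Nb) / 2) \<le> h (d (y (ms j)) (y Nb)) / d (y (ms j)) (y Nb) / 4"
      unfolding g_def D_def by simp
  qed
qed

end


lemma negex: "\<not> (\<forall>e>(0::real). \<exists>F. A F \<and> B F \<and> C F e) \<Longrightarrow> \<exists>e>0. \<forall>F. A F \<and> B F \<longrightarrow> \<not> C F e"
  by blast

lemma (in Metric_space) extract_cfg:
  assumes sf: "snowflaking h" and inf: "infinite M"
  shows "(\<exists>\<epsilon> R. \<epsilon> > 0 \<and> (\<forall>K. cfgI M d K \<epsilon> R)) \<or> (\<forall>K. cfgII M d h K)"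
proof -
  obtain b where b: "b \<in> M" using inf by (metis ex_in_conv finite.emptyI)
  show ?thesis
  proof (cases "\<forall>r. \<exists>x\<in>M. d x b > r")
    case True thus ?thesis using cfg_unbounded[OF sf b] by blast
  next
    case False
    then obtain R where R: "\<forall>x\<in>M. d x b \<le> R" by (auto simp: not_less)
    show ?thesis
    proof (cases "mtotally_bounded M")
      case True
      obtain \<sigma> :: "nat \<Rightarrow> 'a" where \<sigma>: "inj \<sigma>" "range \<sigma> \<subseteq> M" using infinite_countable_subset[OF inf] by blast
      have seqc: "\<forall>\<sigma>::nat\<Rightarrow>'a. range \<sigma> \<subseteq> M \<longrightarrow> (\<exists>r. strict_mono r \<and> MCauchy (\<sigma> \<circ> r))"
        using True unfolding mtotally_bounded_sequentially by (elim conjE)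
      obtain r where r: "strict_mono r" "MCauchy (\<sigma> \<circ> r)" using seqc[rule_format, OF \<sigma>(2)] by (elim exE conjE)
      have "inj r" using r(1) by (auto simp: inj_on_def strict_mono_eq)
      hence "inj (\<sigma> \<circ> r)" using \<sigma>(1) by (rule inj_compose[rotated])
      hence "\<forall>K. cfgII M d h K" using cfg_cauchy[OF sf _ r(2)] by (intro allI)
      thus ?thesis by (rule disjI2)
    next
      case False
      have nt: "\<not> (\<forall>\<epsilon>>0. \<exists>F. finite F \<and> F \<subseteq> M \<and> M \<subseteq> (\<Union>x\<in>F. mball x \<epsilon>))"
        using False unfolding mtotally_bounded_def .
      obtain \<epsilon> where e: "\<epsilon> > 0" "\<forall>F. finite F \<and> F \<subseteq> M \<longrightarrow> \<not> (M \<subseteq> (\<Union>x\<in>F. mball x \<epsilon>))"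
        using negex[OF nt] by (elim exE conjE)
      have "\<forall>K. cfgI M d K \<epsilon> (2*R)" using cfg_sep[OF e b R] by (intro allI)
      thus ?thesis using e(1) by (intro disjI1 exI[of _ \<epsilon>] exI[of _ "2*R"] conjI)
    qed
  qed
qed

lemma decomp:
  assumes N: "is_norm N" and a: "N zP > 0" and c: "N zQ > 0"
    and u: "N ((1 / N zP) *\<^sub>R zP - (1 / N zQ) *\<^sub>R zQ) < 1/4"
  shows "N (zP - zQ) \<le> \<bar>N zP - N zQ\<bar> + N zQ / 4"
proof -
  define uP where "uP = (1 / N zP) *\<^sub>R zP"
  define uQ where "uQ = (1 / N zQ) *\<^sub>R zQ"
  have eP: "N zP *\<^sub>R uP = zP" using a unfolding uP_def by simp
  have eQ: "N zQ *\<^sub>R uQ = zQ" using c unfolding uQ_def by simp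
  have NuP: "N uP = 1" using a is_normD(3)[OF N] unfolding uP_def by simp
  have "zP - zQ = (N zP - N zQ) *\<^sub>R uP + N zQ *\<^sub>R (uP - uQ)"
    using eP eQ by (simp add: algebra_simps)
  hence "N (zP - zQ) \<le> N ((N zP - N zQ) *\<^sub>R uP) + N (N zQ *\<^sub>R (uP - uQ))"
    using is_normD(4)[OF N] by simp
  also have "\<dots> = \<bar>N zP - N zQ\<bar> + N zQ * N (uP - uQ)" using is_normD(3)[OF N] NuP c by simp
  also have "N zQ * N (uP - uQ) \<le> N zQ * (1/4)" using u c unfolding uP_def uQ_def by (intro mult_left_mono) auto
  finally show ?thesis by simp
qed

lemma key_pair:
  assumes ms: "Metric_space X d" and sf: "snowflaking h" and N: "is_norm N"
    and bl: "bi_lipschitz_on X (\<lambda>x y. h (d x y)) (\<lambda>u v. N (u - v)) L f"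
    and L: "L = 1 + \<delta>" "0 < \<delta>" "\<delta> \<le> 1/10"
    and pts: "P \<in> X" "Q \<in> X" "b \<in> X"
    and S: "0 < d Q b" "2 * d Q b \<le> d P b"
    and g: "h (d P b / 2) / (d P b / 2) \<le> h (d Q b) / d Q b / 4"
    and u: "N ((1 / N (f P - f b)) *\<^sub>R (f P - f b) - (1 / N (f Q - f b)) *\<^sub>R (f Q - f b)) < 1/4"
  shows "h (d Q b) \<le> 5 * \<delta> * h (d P b)"
proof -
  define B where "B = d P b"
  define Sd where "Sd = d Q b"
  define e where "e = h (d P Q)"
  have Lp: "L > 0" using L by simp
  have Sp: "Sd > 0" "2 * Sd \<le> B" using S unfolding B_def Sd_def by auto
  have hS: "h Sd > 0" using h_pos[OF sf Sp(1)] .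
  have hSB: "h Sd \<le> h B" using h_mono[OF sf, of Sd B] Sp by simp
  have tri: "B \<le> d P Q + Sd" unfolding B_def Sd_def using Metric_space.triangle[OF ms pts] .
  have dnn: "d P Q \<ge> 0" using Metric_space.nonneg[OF ms] .
  have ee: "e \<ge> h B - h Sd / 4"
  proof (cases "d P Q \<ge> B")
    case True
    hence "h B \<le> e" unfolding e_def using h_mono[OF sf, of B "d P Q"] Sp by simp
    thus ?thesis using hS by linarith
  next
    case False
    have dpos: "0 < d P Q" using tri Sp False by linarith
    have "(d P Q / B) * h B \<le> e" unfolding e_def using h_ratio[OF sf dpos] False by simp
    moreover have "(d P Q / B) * h B \<ge> ((B - Sd)/B) * h B"
      using tri Sp hS hSB by (intro mult_right_mono divide_right_mono) auto
    moreover have "((B - Sd)/B) * h B = h B - Sd * (h B / B)" using Sp hS by (simp add: field_simps)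
    moreover have "h B / B \<le> h (B/2) / (B/2)" using g_anti[OF sf, of "B/2" B] Sp hS by simp
    moreover have "h (B/2) / (B/2) \<le> h Sd / Sd / 4" using g unfolding B_def Sd_def .
    moreover have "Sd * (h B / B) \<le> Sd * (h Sd / Sd / 4)"
      using calculation(4,5) Sp by (intro mult_left_mono) auto
    ultimately have "e \<ge> h B - Sd * (h Sd / Sd / 4)" by linarith
    thus ?thesis using Sp by simp
  qed
  have bl1: "\<And>x y. x \<in> X \<Longrightarrow> y \<in> X \<Longrightarrow> h (d x y) / L \<le> N (f x - f y) \<and> N (f x - f y) \<le> L * h (d x y)"
    using bl unfolding bi_lipschitz_on_def by blast
  have a: "h B / L \<le> N (f P - f b)" "N (f P - f b) \<le> L * h B" using bl1[OF pts(1,3)] unfolding B_def by auto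
  have c: "h Sd / L \<le> N (f Q - f b)" "N (f Q - f b) \<le> L * h Sd" using bl1[OF pts(2,3)] unfolding Sd_def by auto
  have w: "e / L \<le> N (f P - f Q)" using bl1[OF pts(1,2)] unfolding e_def by auto
  have apos: "N (f P - f b) > 0" using a(1) hS hSB Lp by (metis divide_pos_pos order.strict_trans2 order.strict_trans1)
  have cpos: "N (f Q - f b) > 0" using c(1) hS Lp by (metis divide_pos_pos order.strict_trans2)
  have "N ((f P - f b) - (f Q - f b)) \<le> \<bar>N (f P - f b) - N (f Q - f b)\<bar> + N (f Q - f b) / 4"
    by (rule decomp[OF N apos cpos u])
  hence w2: "N (f P - f Q) \<le> \<bar>N (f P - f b) - N (f Q - f b)\<bar> + N (f Q - f b) / 4" by simp
  show ?thesis
    using arith_key[OF L(2,3,1) hS hSB ee a(1,2) c(1,2) w w2] unfolding B_def Sd_def .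
qed



lemma caseII:
  fixes X :: "'a set" and d :: "'a \<Rightarrow> 'a \<Rightarrow> real" and h :: "real \<Rightarrow> real"
  assumes ms: "Metric_space X d" and sf: "snowflaking h" and cf: "cfgII X d h (9 ^ CARD('n) + 1)"
  shows "\<exists>\<delta>>0. \<forall>(N :: real ^ 'n \<Rightarrow> real) (f :: 'a \<Rightarrow> real ^ 'n).
           is_norm N \<longrightarrow> \<not> bi_lipschitz_on X (\<lambda>x y. h (d x y)) (\<lambda>u v. N (u - v)) (1 + \<delta>) f"
proof -
  define K where "K = (9::nat) ^ CARD('n) + 1"
  obtain b x where b: "b \<in> X" and xX: "\<forall>i<K. x i \<in> X \<and> d (x i) b > 0"
    and dst: "\<forall>i<K. \<forall>j<K. i \<noteq> j \<longrightarrow> d (x i) b \<noteq> d (x j) b"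
    and cond: "\<forall>i<K. \<forall>j<K. d (x j) b < d (x i) b \<longrightarrow> 2 * d (x j) b \<le> d (x i) b \<and>
         h (d (x i) b / 2) / (d (x i) b / 2) \<le> h (d (x j) b) / d (x j) b / 4"
    using cf unfolding cfgII_def K_def by (elim bexE exE conjE) 
  define D where "D i = d (x i) b" for i
  have hpos: "h (D i) > 0" if "i < K" for i using h_pos[OF sf] xX that unfolding D_def by blast
  define Rs where "Rs = (\<lambda>(i,j). h (D i) / h (D j)) ` ({..<K} \<times> {..<K})"
  have Kp: "0 < K" unfolding K_def by simp
  have fin: "finite Rs" "Rs \<noteq> {}" unfolding Rs_def using Kp by auto
  define r where "r = Min Rs"
  have "r \<in> Rs" unfolding r_def using fin by (rule Min_in)
  then obtain i0 j0 where "i0 < K" "j0 < K" "r = h (D i0) / h (D j0)" unfolding Rs_def by auto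
  hence rpos: "r > 0" using hpos by simp
  have rle: "r \<le> h (D i) / h (D j)" if "i < K" "j < K" for i j
    unfolding r_def using fin(1) by (rule Min_le) (use that in \<open>auto simp: Rs_def\<close>)
  define \<delta> where "\<delta> = min (1/10) (r/10)"
  have dp: "\<delta> > 0" "\<delta> \<le> 1/10" "\<delta> \<le> r/10" unfolding \<delta>_def using rpos by auto
  show ?thesis
  proof (intro exI[of _ \<delta>] conjI allI impI notI)
    show "\<delta> > 0" by (rule dp(1))
  next
    fix N :: "real ^ 'n \<Rightarrow> real" and f :: "'a \<Rightarrow> real ^ 'n"
    assume N: "is_norm N" and bl: "bi_lipschitz_on X (\<lambda>x y. h (d x y)) (\<lambda>u v. N (u - v)) (1 + \<delta>) f"
    define z where "z i = f (x i) - f b" for i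
    have zpos: "N (z i) > 0" if "i < K" for i
    proof -
      have "h (D i) / (1 + \<delta>) \<le> N (z i)" using bl xX b that unfolding bi_lipschitz_on_def z_def D_def by blast
      moreover have "h (D i) / (1 + \<delta>) > 0" using hpos[OF that] dp by simp
      ultimately show ?thesis by linarith
    qed
    define u where "u i = (1 / N (z i)) *\<^sub>R z i" for i
    have Nu: "N (u i) = 1" if "i < K" for i using zpos[OF that] is_normD(3)[OF N] unfolding u_def by simp
    have close: "\<exists>i<K. \<exists>j<K. i \<noteq> j \<and> N (u i - u j) < 1/4"
    proof (rule ccontr)
      assume nc: "\<not> (\<exists>i<K. \<exists>j<K. i \<noteq> j \<and> N (u i - u j) < 1/4)"
      have far: "\<forall>i<K. \<forall>j<K. i \<noteq> j \<longrightarrow> 1/4 \<le> N (u i - u j)"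
      proof (intro allI impI)
        fix i j assume "i < K" "j < K" "i \<noteq> j"
        hence "\<not> N (u i - u j) < 1/4" using nc by blast
        thus "1/4 \<le> N (u i - u j)" by simp
      qed
      define Pset where "Pset = (\<lambda>i. 4 *\<^sub>R u i) ` {..<K}"
      have inj: "inj_on (\<lambda>i. 4 *\<^sub>R u i) {..<K}"
      proof (rule inj_onI, rule ccontr)
        fix i j assume ij: "i \<in> {..<K}" "j \<in> {..<K}" "4 *\<^sub>R u i = 4 *\<^sub>R u j" "i \<noteq> j"
        hence "u i - u j = 0" by simp
        hence "N (u i - u j) = 0" using is_normD(2)[OF N] by simp
        moreover have "1/4 \<le> N (u i - u j)" using far ij(1,2,4) by simp
        ultimately show False by linarith
      qed
      have card: "card Pset = K" unfolding Pset_def using card_image[OF inj] by simp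
      have "real (card Pset) \<le> (2 * 4 + 1) ^ DIM(real ^ 'n)"
      proof (rule packing[OF N, of 4 Pset 0])
        show "finite Pset" unfolding Pset_def by simp
        show "\<forall>p\<in>Pset. N (p - 0) \<le> 4" unfolding Pset_def using Nu is_normD(3)[OF N] by auto
        show "\<forall>p\<in>Pset. \<forall>q\<in>Pset. p \<noteq> q \<longrightarrow> 1 \<le> N (p - q)"
        proof (intro ballI impI)
          fix p q assume "p \<in> Pset" "q \<in> Pset" "p \<noteq> q"
          then obtain i j where ij: "i < K" "j < K" "p = 4 *\<^sub>R u i" "q = 4 *\<^sub>R u j" "i \<noteq> j"
            unfolding Pset_def by auto
          have "p - q = 4 *\<^sub>R (u i - u j)" using ij by (simp add: algebra_simps)
          hence "N (p - q) = 4 * N (u i - u j)" using is_normD(3)[OF N] by simp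
          moreover have "1/4 \<le> N (u i - u j)" using far ij by blast
          ultimately show "1 \<le> N (p - q)" by linarith
        qed
      qed simp
      hence "real K \<le> 9 ^ CARD('n)" using card by simp
      thus False unfolding K_def by simp
    qed
    then obtain i j where ij: "i < K" "j < K" "i \<noteq> j" "N (u i - u j) < 1/4" by blast
    have main: False if PQ: "P < K" "Q < K" "D Q < D P" "N (u P - u Q) < 1/4" for P Q
    proof -
      have c: "2 * D Q \<le> D P" "h (D P / 2) / (D P / 2) \<le> h (D Q) / D Q / 4"
        using cond PQ unfolding D_def by auto
      have "h (D Q) \<le> 5 * \<delta> * h (D P)"
        unfolding D_def
      proof (rule key_pair[OF ms sf N bl refl dp(1,2)])
        show "x P \<in> X" "x Q \<in> X" "b \<in> X" using xX PQ b by auto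
        show "0 < d (x Q) b" using xX PQ by auto
      qed (use c PQ(4) in \<open>simp_all add: D_def u_def z_def\<close>)
      moreover have "5 * \<delta> * h (D P) \<le> (r/2) * h (D P)"
        using dp hpos[OF PQ(1)] by (intro mult_right_mono) auto
      moreover have "r * h (D P) \<le> h (D Q)" using rle[OF PQ(2,1)] hpos[OF PQ(1)] by (simp add: field_simps)
      ultimately show False using hpos[OF PQ(2)] by linarith
    qed
    have "D i \<noteq> D j" using dst ij unfolding D_def by blast
    hence "D j < D i \<or> D i < D j" by linarith
    thus False
    proof
      assume "D j < D i" thus False using main[of i j] ij by blast
    next
      assume "D i < D j" thus False using main[of j i] ij norm_sym[OF N, of "u i" "u j"] by auto
    qed
  qed
qed

lemma caseI:
  fixes X :: "'a set" and d :: "'a \<Rightarrow> 'a \<Rightarrow> real" and h :: "real \<Rightarrow> real"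
  assumes ms: "Metric_space X d" and sf: "snowflaking h" and e: "\<epsilon> > 0" and cf: "\<forall>K. cfgI X d K \<epsilon> R"
  shows "\<exists>\<delta>>0. \<forall>(N :: real ^ 'n \<Rightarrow> real) (f :: 'a \<Rightarrow> real ^ 'n).
           is_norm N \<longrightarrow> \<not> bi_lipschitz_on X (\<lambda>x y. h (d x y)) (\<lambda>u v. N (u - v)) (1 + \<delta>) f"
proof -
  define Rp where "Rp = max R \<epsilon>"
  define L :: real where "L = 1 + 1/10"
  have he: "h \<epsilon> > 0" using h_pos[OF sf e] .
  have hRp: "h \<epsilon> \<le> h Rp" using h_mono[OF sf, of \<epsilon> Rp] e unfolding Rp_def by simp
  define Rr where "Rr = L * L * h Rp / h \<epsilon>"
  have Rr0: "Rr \<ge> 0" unfolding Rr_def L_def using he hRp by simp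
  define Kc where "Kc = nat \<lceil>(2 * Rr + 1) ^ CARD('n)\<rceil> + 1"
  obtain S where S: "S \<subseteq> X" "finite S" "card S = Kc" "\<forall>x\<in>S. \<forall>y\<in>S. x \<noteq> y \<longrightarrow> \<epsilon> \<le> d x y \<and> d x y \<le> R"
    using cf[rule_format, of Kc] unfolding cfgI_def by (elim exE conjE) blast
  show ?thesis
  proof (intro exI[of _ "1/10"] conjI allI impI notI)
    fix N :: "real ^ 'n \<Rightarrow> real" and f :: "'a \<Rightarrow> real ^ 'n"
    assume N: "is_norm N" and bl: "bi_lipschitz_on X (\<lambda>x y. h (d x y)) (\<lambda>u v. N (u - v)) (1 + 1/10) f"
    have bl1: "h (d x y) / L \<le> N (f x - f y) \<and> N (f x - f y) \<le> L * h (d x y)" if "x \<in> S" "y \<in> S" for x y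
      using bl S(1) that unfolding bi_lipschitz_on_def L_def by blast
    have hb: "h \<epsilon> \<le> h (d x y) \<and> h (d x y) \<le> h Rp" if "x \<in> S" "y \<in> S" "x \<noteq> y" for x y
    proof -
      have dd: "\<epsilon> \<le> d x y \<and> d x y \<le> R" using S(4) that by blast
      have dR: "d x y \<le> Rp" using dd unfolding Rp_def by linarith
      have "h \<epsilon> \<le> h (d x y)" by (rule h_mono[OF sf]) (use e dd in auto)
      moreover have "h (d x y) \<le> h Rp" by (rule h_mono[OF sf]) (use e dd dR in auto)
      ultimately show ?thesis by blast
    qed
    define s where "s = L / h \<epsilon>"
    have sp: "s > 0" unfolding s_def L_def using he by simp
    have lowb: "1 \<le> s * N (f x - f y)" if "x \<in> S" "y \<in> S" "x \<noteq> y" for x y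
    proof -
      have "h \<epsilon> / L \<le> h (d x y) / L" using hb[OF that] unfolding L_def by (intro divide_right_mono) auto
      hence "h \<epsilon> / L \<le> N (f x - f y)" using bl1[OF that(1,2)] by linarith
      hence "s * (h \<epsilon> / L) \<le> s * N (f x - f y)" using sp by (intro mult_left_mono) auto
      moreover have "s * (h \<epsilon> / L) = 1" unfolding s_def L_def using he by simp
      ultimately show ?thesis by linarith
    qed
    have upb: "s * N (f x - f y) \<le> Rr" if "x \<in> S" "y \<in> S" for x y
    proof (cases "x = y")
      case True thus ?thesis using Rr0 is_normD(2)[OF N, of 0] by simp
    next
      case False
      have "N (f x - f y) \<le> L * h Rp" using bl1[OF that] hb[OF that False] unfolding L_def by simp
      hence "s * N (f x - f y) \<le> s * (L * h Rp)" using sp by (intro mult_left_mono) auto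
      also have "\<dots> = Rr" unfolding s_def Rr_def by simp
      finally show ?thesis .
    qed
    have Kp: "Kc > 0" unfolding Kc_def by simp
    hence "S \<noteq> {}" using S(3) by auto
    then obtain x0 where x0: "x0 \<in> S" by blast
    define Pset where "Pset = (\<lambda>x. s *\<^sub>R f x) ` S"
    have inj: "inj_on (\<lambda>x. s *\<^sub>R f x) S"
    proof (rule inj_onI, rule ccontr)
      fix x y assume xy: "x \<in> S" "y \<in> S" "s *\<^sub>R f x = s *\<^sub>R f y" "x \<noteq> y"
      hence "f x = f y" using sp by simp
      hence "N (f x - f y) = 0" using is_normD(2)[OF N] by simp
      thus False using lowb[OF xy(1,2,4)] by simp
    qed
    have card: "card Pset = Kc" unfolding Pset_def using card_image[OF inj] S(3) by simp
    have "real (card Pset) \<le> (2 * Rr + 1) ^ DIM(real ^ 'n)"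
    proof (rule packing[OF N Rr0, of Pset "s *\<^sub>R f x0"])
      show "finite Pset" unfolding Pset_def using S(2) by simp
      show "\<forall>p\<in>Pset. N (p - s *\<^sub>R f x0) \<le> Rr"
      proof
        fix p assume "p \<in> Pset"
        then obtain x where x: "x \<in> S" "p = s *\<^sub>R f x" unfolding Pset_def by auto
        have "p - s *\<^sub>R f x0 = s *\<^sub>R (f x - f x0)" using x by (simp add: algebra_simps)
        hence "N (p - s *\<^sub>R f x0) = s * N (f x - f x0)" using is_normD(3)[OF N] sp by simp
        thus "N (p - s *\<^sub>R f x0) \<le> Rr" using upb[OF x(1) x0] by simp
      qed
      show "\<forall>p\<in>Pset. \<forall>q\<in>Pset. p \<noteq> q \<longrightarrow> 1 \<le> N (p - q)"
      proof (intro ballI impI)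
        fix p q assume "p \<in> Pset" "q \<in> Pset" "p \<noteq> q"
        then obtain x y where xy: "x \<in> S" "y \<in> S" "p = s *\<^sub>R f x" "q = s *\<^sub>R f y" "x \<noteq> y"
          unfolding Pset_def by auto
        have "p - q = s *\<^sub>R (f x - f y)" using xy by (simp add: algebra_simps)
        hence "N (p - q) = s * N (f x - f y)" using is_normD(3)[OF N] sp by simp
        thus "1 \<le> N (p - q)" using lowb[OF xy(1,2,5)] by simp
      qed
    qed
    hence "real Kc \<le> (2 * Rr + 1) ^ CARD('n)" using card by simp
    moreover have "(2 * Rr + 1) ^ CARD('n) \<le> real (nat \<lceil>(2 * Rr + 1) ^ CARD('n)\<rceil>)" by (rule real_nat_ceiling_ge)
    ultimately show False unfolding Kc_def by simp
  qed simp
qed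

theorem corollary2p1:
  fixes X :: "'a set" and d :: "'a \<Rightarrow> 'a \<Rightarrow> real" and h :: "real \<Rightarrow> real"
  assumes "Metric_space X d" and "infinite X" and "snowflaking h"
  shows "\<exists>\<delta>>0. \<forall>(N :: real ^ 'n \<Rightarrow> real) (f :: 'a \<Rightarrow> real ^ 'n).
           is_norm N \<longrightarrow>
           \<not> bi_lipschitz_on X (\<lambda>x y. h (d x y)) (\<lambda>u v. N (u - v)) (1 + \<delta>) f"
proof -
  have "(\<exists>\<epsilon> R. \<epsilon> > 0 \<and> (\<forall>K. cfgI X d K \<epsilon> R)) \<or> (\<forall>K. cfgII X d h K)"
    by (rule Metric_space.extract_cfg[OF assms(1,3,2)])
  thus ?thesis
  proof
    assume "\<exists>\<epsilon> R. \<epsilon> > 0 \<and> (\<forall>K. cfgI X d K \<epsilon> R)"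
    then obtain \<epsilon> R where "\<epsilon> > 0" "\<forall>K. cfgI X d K \<epsilon> R" by blast
    thus ?thesis by (rule caseI[OF assms(1,3)])
  next
    assume "\<forall>K. cfgII X d h K"
    thus ?thesis using caseII[OF assms(1,3)] by blast
  qed
qed

end
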